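(* For every integer $n\ge0$, $$E_{2n+1}=a_{2n+1,n}=\frac{1}{2^n}\Big(-A_{2n+1,n}+2\sum_{i=0}^{\lfloor n/2\rfloor}(-1)^iA_{2n+1,n-2i}\Big),$$ $$E_{2n+2}=a_{2n+2,n}=\frac{1}{2^n}\Big(-\sum_{j=0}^{n}(-1)^{n-j}A_{2n+2,j}+2\sum_{\substack{i,j\ge0\\ 2i+j\le n}}(-1)^{n-i-j}A_{2n+2,j}\Big).$$
   Context: For a permutation $\pi=a_1\cdots a_n$ of $[n]$, an index $i\in[n-1]$ is a descent if $a_i>a_{i+1}$. $A_{n,k}$ (Eulerian number) is the number of $\pi\in\mathfrak S_n$ with exactly $k$ descents. $a_{n,k}$ is the number of $\pi\in\mathfrak S_n$ having exactly $k$ descents at even positions and no descents at odd positions. $E_n$ (Euler number) is the number of alternating permutations $a_1>a_2<a_3>\cdots$ in $\mathfrak S_n$ (equivalently of reverse alternating ones $a_1<a_2>a_3<\cdots$); $\sum_{n\ge0}E_nt^n/n!=\tan t+\sec t$. *)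

theory Defs
  imports "HOL-Combinatorics.Multiset_Permutations"
begin

text \<open>Permutations of [n] are represented as lists a_1 ... a_n (0-indexed in Isabelle:
  a_i = p ! (i - 1)). Index i in [n-1] is a descent iff a_i > a_{i+1}.\<close>

definition descents :: "nat list \<Rightarrow> nat set" where
  "descents p = {i. 1 \<le> i \<and> i < length p \<and> p ! (i - 1) > p ! i}"

definition eulerian :: "nat \<Rightarrow> nat \<Rightarrow> nat" where
  "eulerian n k = card {p \<in> permutations_of_set {1..n}. card (descents p) = k}"

definition a_num :: "nat \<Rightarrow> nat \<Rightarrow> nat" where
  "a_num n k = card {p \<in> permutations_of_set {1..n}.
       card {i \<in> descents p. even i} = k \<and> (\<forall>i \<in> descents p. even i)}"

definition euler_num :: "nat \<Rightarrow> nat" where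
  "euler_num n = card {p \<in> permutations_of_set {1..n}.
       \<forall>i. 1 \<le> i \<and> i < n \<longrightarrow> (p ! (i - 1) > p ! i \<longleftrightarrow> odd i)}"

end

theory Submission
  imports Defs Complex_Main
begin


abbreviation perms :: "nat \<Rightarrow> nat list set" where "perms N \<equiv> permutations_of_set {1..N}"

definition shft :: "nat \<Rightarrow> nat \<Rightarrow> nat" where "shft v x = (if v \<le> x then Suc x else x)"
definition unshft :: "nat \<Rightarrow> nat \<Rightarrow> nat" where "unshft v x = (if v < x then x - 1 else x)"
definition ins :: "nat \<Rightarrow> nat list \<Rightarrow> nat list" where "ins v p = map (shft v) p @ [v]"

lemma perms_length: "p \<in> perms N \<Longrightarrow> length p = N"
  by (metis card_atLeastAtMost diff_Suc_1 distinct_card permutations_of_setD)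

lemma shft_inj: "inj (shft v)"
  by (auto simp: inj_def shft_def split: if_splits)

lemma shft_mono: "shft v a < shft v b \<longleftrightarrow> a < b"
  by (auto simp: shft_def)

lemma ins_in: assumes "p \<in> perms N" "v \<in> {1..Suc N}" shows "ins v p \<in> perms (Suc N)"
proof -
  have s: "set p = {1..N}" "distinct p" using assms(1) by (auto dest: permutations_of_setD)
  have "shft v ` {1..N} = {1..Suc N} - {v}"
  proof
    show "shft v ` {1..N} \<subseteq> {1..Suc N} - {v}" using assms(2) by (auto simp: shft_def)
    show "{1..Suc N} - {v} \<subseteq> shft v ` {1..N}"
    proof
      fix x assume x: "x \<in> {1..Suc N} - {v}"
      have "shft v (unshft v x) = x" "unshft v x \<in> {1..N}" using x assms(2)
        by (auto simp: shft_def unshft_def)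
      then show "x \<in> shft v ` {1..N}" by (metis imageI)
    qed
  qed
  then show ?thesis using s assms(2) shft_inj
    by (auto simp: ins_def distinct_map inj_on_def permutations_of_set_def)
qed

lemma ins_bij: assumes "v \<in> {1..Suc N}"
  shows "bij_betw (ins v) (perms N) {q \<in> perms (Suc N). last q = v}"
proof (rule bij_betw_imageI)
  show "inj_on (ins v) (perms N)" using shft_inj
    by (auto simp: inj_on_def ins_def inj_map_eq_map)
  show "ins v ` perms N = {q \<in> perms (Suc N). last q = v}"
  proof
    show "ins v ` perms N \<subseteq> {q \<in> perms (Suc N). last q = v}"
      using ins_in assms by (auto simp: ins_def)
    show "{q \<in> perms (Suc N). last q = v} \<subseteq> ins v ` perms N"
    proof
      fix q assume q: "q \<in> {q \<in> perms (Suc N). last q = v}"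
      then have sq: "set q = {1..Suc N}" "distinct q" "last q = v"
        by (auto dest: permutations_of_setD)
      then have qne: "q \<noteq> []" by auto
      have qd: "q = butlast q @ [v]" using qne sq(3) by (metis append_butlast_last_id)
      have vnb: "v \<notin> set (butlast q)" "distinct (butlast q)"
        using sq(2) qd by (metis distinct_append disjoint_iff list.set_intros(1)) (metis distinct_append sq(2) qd)
      have sb: "set (butlast q) = {1..Suc N} - {v}" using sq qd vnb
        by (metis Diff_insert_absorb Un_insert_right list.set(1) list.set(2) set_append sup_bot.right_neutral)
      define p where "p = map (unshft v) (butlast q)"
      have inv: "\<And>x. x \<noteq> v \<Longrightarrow> shft v (unshft v x) = x"
        by (auto simp: shft_def unshft_def)
      have "map (shft v) p = butlast q"
      proof -
        have "\<forall>x\<in>set (butlast q). shft v (unshft v x) = x" using vnb(1) inv by metis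
        then show ?thesis unfolding p_def by (simp add: map_idI)
      qed
      then have e: "ins v p = q" using qd by (simp add: ins_def)
      have ui: "inj_on (unshft v) (set (butlast q))"
      proof (rule inj_on_inverseI[where g="shft v"])
        fix x assume "x \<in> set (butlast q)"
        then have "x \<noteq> v" using vnb(1) by blast
        then show "shft v (unshft v x) = x" by (rule inv)
      qed
      have "unshft v ` ({1..Suc N} - {v}) = {1..N}"
      proof
        show "unshft v ` ({1..Suc N} - {v}) \<subseteq> {1..N}" using assms by (auto simp: unshft_def)
        show "{1..N} \<subseteq> unshft v ` ({1..Suc N} - {v})"
        proof
          fix x assume x: "x \<in> {1..N}"
          have "unshft v (shft v x) = x" "shft v x \<in> {1..Suc N} - {v}" using x
            by (auto simp: shft_def unshft_def)
          then show "x \<in> unshft v ` ({1..Suc N} - {v})" by (metis imageI)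
        qed
      qed
      then have "p \<in> perms N" using sb ui vnb(2)
        by (auto simp: p_def permutations_of_set_def distinct_map)
      then show "q \<in> ins v ` perms N" using e by blast
    qed
  qed
qed

lemma descents_sub: "descents p \<subseteq> {1..<length p}"
  by (auto simp: descents_def)

lemma finite_descents[simp]: "finite (descents p)"
  using descents_sub finite_subset by blast

lemma descents_ins: assumes "p \<noteq> []"
  shows "descents (ins v p) = descents p \<union> (if v \<le> last p then {length p} else {})"
proof -
  have L: "length (ins v p) = Suc (length p)" by (simp add: ins_def)
  have A: "i < length p \<Longrightarrow> ins v p ! i = shft v (p ! i)" for i
    by (simp add: ins_def nth_append)
  have B: "ins v p ! length p = v" by (simp add: ins_def nth_append)
  have C: "p ! (length p - 1) = last p" using assms by (simp add: last_conv_nth)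
  have "i \<in> descents (ins v p) \<longleftrightarrow> i \<in> descents p \<union> (if v \<le> last p then {length p} else {})" for i
  proof (cases "i < length p")
    case True
    then show ?thesis using A[of i] A[of "i-1"] shft_mono[of v "p!i" "p!(i-1)"]
      by (auto simp: descents_def L)
  next
    case False
    have lp: "1 \<le> length p" using assms by (cases p) auto
    show ?thesis
    proof (cases "i = length p")
      case True
      then show ?thesis using A[of "length p - 1"] B C lp
        by (auto simp: descents_def L shft_def)
    next
      case F2: False
      then show ?thesis using False by (auto simp: descents_def L)
    qed
  qed
  then show ?thesis by blast
qed

lemma step:
  fixes g :: "nat set \<Rightarrow> 'a::comm_monoid_add"
  assumes "1 \<le> N" "v \<in> {1..Suc N}"
  shows "(\<Sum>q\<in>{q \<in> perms (Suc N). last q = v}. g (descents q))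
       = (\<Sum>u=1..N. \<Sum>p\<in>{p \<in> perms N. last p = u}. g (descents p \<union> (if v \<le> u then {N} else {})))"
proof -
  have "(\<Sum>q\<in>{q \<in> perms (Suc N). last q = v}. g (descents q))
      = (\<Sum>p\<in>perms N. g (descents (ins v p)))"
    using sum.reindex_bij_betw[OF ins_bij[OF assms(2)], of "\<lambda>q. g (descents q)"] by simp
  also have "\<dots> = (\<Sum>p\<in>perms N. g (descents p \<union> (if v \<le> last p then {N} else {})))"
  proof (rule sum.cong[OF refl])
    fix p assume p: "p \<in> perms N"
    then have "length p = N" by (rule perms_length)
    then have "p \<noteq> []" using assms(1) by auto
    then show "g (descents (ins v p)) = g (descents p \<union> (if v \<le> last p then {N} else {}))"
      using `length p = N` descents_ins[of p v] by auto
  qed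
  also have "\<dots> = (\<Sum>u=1..N. \<Sum>p\<in>{p \<in> perms N. last p = u}. g (descents p \<union> (if v \<le> last p then {N} else {})))"
  proof (rule sum.group[symmetric])
    show "last ` perms N \<subseteq> {1..N}"
    proof
      fix x assume "x \<in> last ` perms N"
      then obtain p where p: "p \<in> perms N" "x = last p" by blast
      then have "length p = N" "set p = {1..N}" by (auto simp: perms_length dest: permutations_of_setD)
      then show "x \<in> {1..N}" using p assms(1) by (metis last_in_set list.size(3) not_one_le_zero)
    qed
  qed auto
  also have "\<dots> = (\<Sum>u=1..N. \<Sum>p\<in>{p \<in> perms N. last p = u}. g (descents p \<union> (if v \<le> u then {N} else {})))"
    by (intro sum.cong refl) auto
  finally show ?thesis .
qed


definition T :: "bool \<Rightarrow> nat \<Rightarrow> nat set" where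
  "T r N = {i. 1 \<le> i \<and> i < N \<and> (even i = r)}"

definition C :: "bool \<Rightarrow> nat \<Rightarrow> nat \<Rightarrow> complex" where
  "C r N v = (\<Sum>p\<in>{p \<in> perms N. last p = v}. if descents p = T r N then 1 else 0)"

definition F :: "nat \<Rightarrow> nat \<Rightarrow> complex" where
  "F N v = (\<Sum>p\<in>{p \<in> perms N. last p = v}. \<i> ^ card (descents p))"

lemma notin_desc: "p \<in> perms N \<Longrightarrow> N \<notin> descents p"
  using descents_sub[of p] perms_length[of p N] by auto

lemma F_rec: assumes "1 \<le> N" "v \<in> {1..Suc N}"
  shows "F (Suc N) v = (\<Sum>u=1..N. (if v \<le> u then \<i> else 1) * F N u)"
proof -
  have "F (Suc N) v = (\<Sum>u=1..N. \<Sum>p\<in>{p \<in> perms N. last p = u}. \<i> ^ card (descents p \<union> (if v \<le> u then {N} else {})))"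
    unfolding F_def by (rule step[OF assms])
  also have "\<dots> = (\<Sum>u=1..N. (if v \<le> u then \<i> else 1) * F N u)"
    unfolding F_def
  proof (rule sum.cong[OF refl])
  fix u assume u: "u \<in> {1..N}"
  show "(\<Sum>p\<in>{p \<in> perms N. last p = u}. \<i> ^ card (descents p \<union> (if v \<le> u then {N} else {}))) =
         (if v \<le> u then \<i> else 1) * (\<Sum>p\<in>{p \<in> perms N. last p = u}. \<i> ^ card (descents p))"
    unfolding sum_distrib_left
  proof (rule sum.cong[OF refl])
    fix p assume "p \<in> {p \<in> perms N. last p = u}"
    then have "N \<notin> descents p" using notin_desc by blast
    then show "\<i> ^ card (descents p \<union> (if v \<le> u then {N} else {})) = (if v \<le> u then \<i> else 1) * \<i> ^ card (descents p)"
      by auto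
  qed
qed
  finally show ?thesis .
qed

lemma T_Suc: "1 \<le> N \<Longrightarrow> T r (Suc N) = T r N \<union> (if even N = r then {N} else {})"
  by (auto simp: T_def less_Suc_eq)

lemma C_rec: assumes "1 \<le> N" "v \<in> {1..Suc N}"
  shows "C r (Suc N) v = (\<Sum>u=1..N. if (v \<le> u) = (even N = r) then C r N u else 0)"
proof -
  have "C r (Suc N) v = (\<Sum>u=1..N. \<Sum>p\<in>{p \<in> perms N. last p = u}. if descents p \<union> (if v \<le> u then {N} else {}) = T r (Suc N) then 1 else 0)"
    unfolding C_def by (rule step[OF assms])
  also have "\<dots> = (\<Sum>u=1..N. if (v \<le> u) = (even N = r) then C r N u else 0)"
    unfolding C_def
  proof (rule sum.cong[OF refl])
  fix u assume u: "u \<in> {1..N}"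
  show "(\<Sum>p\<in>{p \<in> perms N. last p = u}. if descents p \<union> (if v \<le> u then {N} else {}) = T r (Suc N) then 1 else 0) =
        (if (v \<le> u) = (even N = r) then (\<Sum>p\<in>{p \<in> perms N. last p = u}. if descents p = T r N then 1 else (0::complex)) else 0)"
  proof (cases "(v \<le> u) = (even N = r)")
    case True
    show ?thesis unfolding if_P[OF True]
    proof (rule sum.cong[OF refl])
      fix p assume "p \<in> {p \<in> perms N. last p = u}"
      then have "N \<notin> descents p" using notin_desc by blast
      moreover have "N \<notin> T r N" by (auto simp: T_def)
      ultimately have "descents p \<union> (if v \<le> u then {N} else {}) = T r (Suc N) \<longleftrightarrow> descents p = T r N"
        using True T_Suc[OF assms(1), of r] by auto
      then show "(if descents p \<union> (if v \<le> u then {N} else {}) = T r (Suc N) then 1 else 0) =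
           (if descents p = T r N then 1 else (0::complex))" by simp
    qed
  next
    case False
    show ?thesis unfolding if_not_P[OF False]
    proof (rule sum.neutral, rule ballI)
      fix p assume "p \<in> {p \<in> perms N. last p = u}"
      then have "N \<notin> descents p" using notin_desc by blast
      moreover have "N \<notin> T r N" by (auto simp: T_def)
      ultimately have "descents p \<union> (if v \<le> u then {N} else {}) \<noteq> T r (Suc N)"
        using False T_Suc[OF assms(1), of r] by auto
      then show "(if descents p \<union> (if v \<le> u then {N} else {}) = T r (Suc N) then 1 else 0) = (0::complex)" by simp
    qed
  qed
qed
  finally show ?thesis .
qed

lemma perms1: "perms 1 = {[1]}"
proof
  show "{[1]} \<subseteq> perms 1" by (auto simp: permutations_of_set_def)
  show "perms 1 \<subseteq> {[1]}"
  proof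
    fix p assume p: "p \<in> perms 1"
    then have "length p = 1" "set p = {1}" using perms_length[OF p] by (auto dest: permutations_of_setD)
    then show "p \<in> {[1]}" by (cases p) auto
  qed
qed

lemma d1: "descents [Suc 0] = {}" by (auto simp: descents_def)
lemma s1: "{p \<in> perms 1. last p = 1} = {[1]}" by (auto simp: perms1)
lemma F1: "F 1 1 = 1" and C1: "C r 1 1 = 1"
  unfolding F_def C_def s1 by (auto simp: d1 T_def)





lemma refl_C: "v \<in> {1..Suc m} \<Longrightarrow> C True (Suc m) v = C False (Suc m) (Suc (Suc m) - v)"
proof (induction m arbitrary: v)
  case 0
  then have "v = 1" by auto
  then show ?case by (simp add: C1[simplified])
next
  case (Suc m)
  define N where "N = Suc m"
  have N1: "1 \<le> N" by (simp add: N_def)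
  have v: "v \<in> {1..Suc N}" using Suc.prems by (simp add: N_def)
  have v': "Suc (Suc N) - v \<in> {1..Suc N}" using v by auto
  have "C True (Suc N) v = (\<Sum>u=1..N. if (v \<le> u) = even N then C False N (Suc N - u) else 0)"
    unfolding C_rec[OF N1 v]
    by (intro sum.cong refl) (use Suc.IH in \<open>auto simp: N_def\<close>)
  also have "\<dots> = (\<Sum>u=1..N. if (Suc (Suc N) - v \<le> N + 1 - u) = odd N then C False N (N + 1 - u) else 0)"
    by (intro sum.cong refl) (use v in auto)
  also have "\<dots> = (\<Sum>w=1..N. if (Suc (Suc N) - v \<le> w) = odd N then C False N w else 0)"
    by (rule sum.atLeastAtMost_rev[symmetric])
  also have "\<dots> = C False (Suc N) (Suc (Suc N) - v)"
    unfolding C_rec[OF N1 v'] by simp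
  finally show ?case by (simp add: N_def)
qed

lemma sumC: "(\<Sum>v=1..Suc m. C True (Suc m) v) = (\<Sum>v=1..Suc m. C False (Suc m) v)"
proof -
  have "(\<Sum>v=1..Suc m. C True (Suc m) v) = (\<Sum>v=1..Suc m. C False (Suc m) (Suc m + 1 - v))"
    by (intro sum.cong refl) (simp add: refl_C)
  also have "\<dots> = (\<Sum>v=1..Suc m. C False (Suc m) v)"
    by (rule sum.atLeastAtMost_rev[symmetric])
  finally show ?thesis .
qed

lemma if_swap: "(if \<not> P then x else y) = (if P then y else x)" by simp

definition H :: "nat \<Rightarrow> nat \<Rightarrow> complex" where
  "H N v = (if odd N then (1+\<i>)*C True N v + (1-\<i>)*C False N v else (1+\<i>)*C False N v + (1-\<i>)*C True N v)"

lemma pt1: "(if b then \<i> else 1) * ((1+\<i>)*x + (1-\<i>)*y) = (1+\<i>)*((1+\<i>)*(if b then y else 0) + (1-\<i>)*(if b then 0 else x)) - (1-\<i>)*(x - y)"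
  by (cases b) (simp_all add: algebra_simps)

lemma mainF_step:
  fixes X Y :: "nat \<Rightarrow> complex" and N v :: nat
  assumes sc: "(\<Sum>u=1..N. X u) = (\<Sum>u=1..N. Y u)"
  shows "(\<Sum>u=1..N. (if v \<le> u then \<i> else 1) * ((1+\<i>)*X u + (1-\<i>)*Y u))
     = (1+\<i>)*((1+\<i>)*(\<Sum>u=1..N. if v \<le> u then Y u else 0) + (1-\<i>)*(\<Sum>u=1..N. if v \<le> u then 0 else X u))"
proof -
  have "(\<Sum>u=1..N. (if v \<le> u then \<i> else 1) * ((1+\<i>)*X u + (1-\<i>)*Y u))
      = (\<Sum>u=1..N. (1+\<i>)*((1+\<i>)*(if v \<le> u then Y u else 0) + (1-\<i>)*(if v \<le> u then 0 else X u)) - (1-\<i>)*(X u - Y u))"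
    by (intro sum.cong refl) (rule pt1)
  also have "\<dots> = (1+\<i>)*((1+\<i>)*(\<Sum>u=1..N. if v \<le> u then Y u else 0) + (1-\<i>)*(\<Sum>u=1..N. if v \<le> u then 0 else X u)) - (1-\<i>)*((\<Sum>u=1..N. X u) - (\<Sum>u=1..N. Y u))"
    by (simp only: sum_subtractf sum.distrib sum_distrib_left distrib_left right_diff_distrib)
  finally show ?thesis using sc by simp
qed

lemma mainF: "v \<in> {1..Suc m} \<Longrightarrow> F (Suc m) v = (1+\<i>)^m/2 * H (Suc m) v"
proof (induction m arbitrary: v)
  case 0
  then have "v = 1" by auto
  then show ?case by (simp add: F1[simplified] C1[simplified] H_def)
next
  case (Suc m)
  define N where "N = Suc m"
  have N1: "1 \<le> N" by (simp add: N_def)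
  have v: "v \<in> {1..Suc N}" using Suc.prems by (simp add: N_def)
  define c where "c = (1+\<i>)^m/2"
  have sc: "(\<Sum>u=1..N. C True N u) = (\<Sum>u=1..N. C False N u)" unfolding N_def by (rule sumC)
  have IH: "u \<in> {1..N} \<Longrightarrow> F N u = c * H N u" for u using Suc.IH unfolding N_def c_def by blast
  have "F (Suc N) v = (\<Sum>u=1..N. (if v \<le> u then \<i> else 1) * (c * H N u))"
    unfolding F_rec[OF N1 v] by (intro sum.cong refl) (simp add: IH)
  also have "\<dots> = c * (\<Sum>u=1..N. (if v \<le> u then \<i> else 1) * H N u)"
    by (simp only: sum_distrib_left mult.left_commute)
  also have "(\<Sum>u=1..N. (if v \<le> u then \<i> else 1) * H N u) = (1+\<i>) * H (Suc N) v"
  proof (cases "odd N")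
    case True
    have h1: "C False (Suc N) v = (\<Sum>u=1..N. if v \<le> u then C False N u else 0)"
      unfolding C_rec[OF N1 v] using True by (intro sum.cong refl) auto
    have h2: "C True (Suc N) v = (\<Sum>u=1..N. if v \<le> u then 0 else C True N u)"
      unfolding C_rec[OF N1 v] using True by (intro sum.cong refl) auto
    have "(\<Sum>u=1..N. (if v \<le> u then \<i> else 1) * H N u) = (\<Sum>u=1..N. (if v \<le> u then \<i> else 1) * ((1+\<i>)*C True N u + (1-\<i>)*C False N u))"
      using True by (simp add: H_def)
    also have "\<dots> = (1+\<i>) * ((1+\<i>) * C False (Suc N) v + (1-\<i>) * C True (Suc N) v)"
      unfolding h1 h2 by (rule mainF_step[OF sc])
    also have "\<dots> = (1+\<i>) * H (Suc N) v" using True by (simp add: H_def)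
    finally show ?thesis .
  next
    case False
    have h1: "C True (Suc N) v = (\<Sum>u=1..N. if v \<le> u then C True N u else 0)"
      unfolding C_rec[OF N1 v] using False by (intro sum.cong refl) auto
    have h2: "C False (Suc N) v = (\<Sum>u=1..N. if v \<le> u then 0 else C False N u)"
      unfolding C_rec[OF N1 v] using False by (intro sum.cong refl) auto
    have "(\<Sum>u=1..N. (if v \<le> u then \<i> else 1) * H N u) = (\<Sum>u=1..N. (if v \<le> u then \<i> else 1) * ((1+\<i>)*C False N u + (1-\<i>)*C True N u))"
      using False by (simp add: H_def)
    also have "\<dots> = (1+\<i>) * ((1+\<i>) * C True (Suc N) v + (1-\<i>) * C False (Suc N) v)"
      unfolding h1 h2 by (rule mainF_step[OF sc[symmetric]])
    also have "\<dots> = (1+\<i>) * H (Suc N) v" using False by (simp add: H_def)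
    finally show ?thesis .
  qed
  finally show ?case by (simp add: N_def c_def)
qed




lemma group_last:
  fixes g :: "nat list \<Rightarrow> 'a::comm_monoid_add"
  assumes "1 \<le> N"
  shows "(\<Sum>v=1..N. \<Sum>p\<in>{p \<in> perms N. last p = v}. g p) = (\<Sum>p\<in>perms N. g p)"
proof (rule sum.group)
  show "last ` perms N \<subseteq> {1..N}"
  proof
    fix x assume "x \<in> last ` perms N"
    then obtain p where p: "p \<in> perms N" "x = last p" by blast
    then have "length p = N" "set p = {1..N}" by (auto simp: perms_length dest: permutations_of_setD)
    then show "x \<in> {1..N}" using p assms(1) by (metis last_in_set list.size(3) not_one_le_zero)
  qed
qed auto

lemma sum_ind: "finite A \<Longrightarrow> (\<Sum>x\<in>A. if P x then 1 else 0) = (of_nat (card {x\<in>A. P x}) :: complex)"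
proof -
  assume f: "finite A"
  have "(\<Sum>x\<in>A. if P x then 1 else 0) = (\<Sum>x\<in>A. of_bool (P x) :: complex)" by (intro sum.cong) auto
  also have "\<dots> = of_nat (card (A \<inter> {x. P x}))" using f by simp
  also have "A \<inter> {x. P x} = {x\<in>A. P x}" by auto
  finally show ?thesis .
qed

lemma sumC_card: assumes "1 \<le> N" shows "(\<Sum>v=1..N. C r N v) = of_nat (card {p \<in> perms N. descents p = T r N})"
proof -
  have "(\<Sum>v=1..N. C r N v) = (\<Sum>p\<in>perms N. if descents p = T r N then 1 else 0)"
    unfolding C_def by (rule group_last[OF assms])
  also have "\<dots> = of_nat (card {p \<in> perms N. descents p = T r N})" by (rule sum_ind) simp
  finally show ?thesis .
qed

lemma sumF: assumes "1 \<le> N" shows "(\<Sum>v=1..N. F N v) = (\<Sum>k<N. of_nat (eulerian N k) * \<i>^k)"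
proof -
  have "(\<Sum>v=1..N. F N v) = (\<Sum>p\<in>perms N. \<i> ^ card (descents p))"
    unfolding F_def using assms by (rule group_last)
  also have "\<dots> = (\<Sum>k<N. \<Sum>p\<in>{p\<in>perms N. card (descents p) = k}. \<i> ^ card (descents p))"
  proof (rule sum.group[symmetric])
    show "(\<lambda>p. card (descents p)) ` perms N \<subseteq> {..<N}"
    proof
      fix x assume "x \<in> (\<lambda>p. card (descents p)) ` perms N"
      then obtain p where p: "p \<in> perms N" "x = card (descents p)" by blast
      have "descents p \<subseteq> {1..<N}" using descents_sub[of p] perms_length[OF p(1)] by simp
      then have "card (descents p) \<le> card {1..<N}" by (intro card_mono) simp_all
      then have "x \<le> card {1..<N}" using p(2) by simp
      then show "x \<in> {..<N}" using assms by auto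
    qed
  qed auto
  also have "\<dots> = (\<Sum>k<N. of_nat (eulerian N k) * \<i>^k)"
    by (intro sum.cong refl) (simp add: eulerian_def)
  finally show ?thesis .
qed

lemma T_euler: "p \<in> perms N \<Longrightarrow> descents p = T False N \<longleftrightarrow> (\<forall>i. 1 \<le> i \<and> i < N \<longrightarrow> (p ! (i - 1) > p ! i \<longleftrightarrow> odd i))"
  using perms_length[of p N] by (auto simp: descents_def T_def)

lemma core: "(\<Sum>k<Suc m. of_nat (eulerian (Suc m) k) * \<i>^k) = (1+\<i>)^m * of_nat (euler_num (Suc m))"
proof -
  have e: "{p \<in> perms (Suc m). descents p = T False (Suc m)} = {p \<in> perms (Suc m).
       \<forall>i. 1 \<le> i \<and> i < Suc m \<longrightarrow> (p ! (i - 1) > p ! i \<longleftrightarrow> odd i)}"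
    using T_euler by blast
  have "(\<Sum>v=1..Suc m. C False (Suc m) v) = of_nat (card {p \<in> perms (Suc m). descents p = T False (Suc m)})"
    by (rule sumC_card) simp
  also have "card {p \<in> perms (Suc m). descents p = T False (Suc m)} = euler_num (Suc m)"
    by (simp only: e euler_num_def)
  finally have sE: "(\<Sum>v=1..Suc m. C False (Suc m) v) = of_nat (euler_num (Suc m))" .
  have "(\<Sum>k<Suc m. of_nat (eulerian (Suc m) k) * \<i>^k) = (\<Sum>v=1..Suc m. F (Suc m) v)"
    by (rule sumF[symmetric]) simp
  also have "\<dots> = (\<Sum>v=1..Suc m. (1+\<i>)^m/2 * H (Suc m) v)"
    by (rule sum.cong) (simp_all add: mainF)
  also have "\<dots> = (1+\<i>)^m/2 * (\<Sum>v=1..Suc m. H (Suc m) v)"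
    by (rule sum_distrib_left[symmetric])
  also have "(\<Sum>v=1..Suc m. H (Suc m) v) = 2 * of_nat (euler_num (Suc m))"
  proof -
    define ST where "ST = (\<Sum>v=1..Suc m. C True (Suc m) v)"
    define SF where "SF = (\<Sum>v=1..Suc m. C False (Suc m) v)"
    have st: "ST = of_nat (euler_num (Suc m))" "SF = of_nat (euler_num (Suc m))"
      using sumC[of m] sE unfolding ST_def SF_def by simp_all
    have "(\<Sum>v=1..Suc m. H (Suc m) v) = (if odd (Suc m) then (1+\<i>)*ST + (1-\<i>)*SF else (1+\<i>)*SF + (1-\<i>)*ST)"
      unfolding H_def ST_def SF_def by (cases "odd (Suc m)") (simp_all only: if_True if_False not_False_eq_True not_True_eq_False sum.distrib sum_distrib_left)
    then show ?thesis unfolding st by (simp add: algebra_simps)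
  qed
  finally show ?thesis by simp
qed




lemma sym_avg:
  fixes A t :: "nat \<Rightarrow> real"
  assumes "\<And>k. k \<le> M \<Longrightarrow> A k = A (M-k)"
  shows "(\<Sum>k=0..M. A k * t k) = (\<Sum>k=0..M. A k * ((t k + t (M-k))/2))"
proof -
  have "(\<Sum>k=0..M. A k * t k) = (\<Sum>k=0..M. A (M+0-k) * t (M+0-k))"
    by (rule sum.atLeastAtMost_rev)
  also have "\<dots> = (\<Sum>k=0..M. A k * t (M-k))"
  proof (intro sum.cong refl)
    fix k assume "k \<in> {0..M}"
    then have "A (M-k) = A k" using assms[of "M-k"] by simp
    then show "A (M+0-k) * t (M+0-k) = A k * t (M-k)" by simp
  qed
  finally have e: "(\<Sum>k=0..M. A k * t k) = (\<Sum>k=0..M. A k * t (M-k))" .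
  have "(\<Sum>k=0..M. A k * ((t k + t (M-k))/2)) = (\<Sum>k=0..M. (A k * t k + A k * t (M-k))/2)"
    by (intro sum.cong refl) (simp add: distrib_left)
  also have "\<dots> = (\<Sum>k=0..M. A k * t k + A k * t (M-k))/2"
    by (rule sum_divide_distrib[symmetric])
  also have "\<dots> = ((\<Sum>k=0..M. A k * t k) + (\<Sum>k=0..M. A k * t (M-k)))/2"
    by (simp only: sum.distrib)
  finally have "(\<Sum>k=0..M. A k * ((t k + t (M-k))/2)) = ((\<Sum>k=0..M. A k * t k) + (\<Sum>k=0..M. A k * t (M-k)))/2" .
  then show ?thesis using e by simp
qed

lemma pw2: "(2*\<i>)^n * (-\<i>)^n = (2::complex)^n"
proof -
  have "(2*\<i>)^n * (-\<i>)^n = (2*\<i>*(-\<i>))^n" by (rule power_mult_distrib[symmetric])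
  also have "2*\<i>*(-\<i>) = (2::complex)" by (simp add: complex_eq_iff)
  finally show ?thesis .
qed

lemma ac3: "(a::complex)*b*c = (a*c)*b" by (simp add: ac_simps)

lemma i_pow_even: "\<i> ^ (2*q) = (-1)^q"
  by (simp add: power_mult)

lemma re_i_pow: "Re (\<i>^d) = (if even d then (-1)^(d div 2) else 0)"
proof (cases "even d")
  case True
  then obtain q where "d = 2*q" by blast
  then show ?thesis by (simp add: i_pow_even)
next
  case False
  then obtain q where "d = 2*q+1" using oddE by blast
  then show ?thesis by (simp add: i_pow_even power_add)
qed

lemma mi_pow: "(-\<i>)^d = cnj (\<i>^d)" by simp

lemma i_mi: "\<i>^k * (-\<i>)^k = 1"
  by (simp add: power_mult_distrib[symmetric])

lemma split_low: "k \<le> n \<Longrightarrow> \<i>^k * (-\<i>)^n = (-\<i>)^(n-k)"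
proof -
  assume "k \<le> n"
  then have "(-\<i>)^n = (-\<i>)^k * (-\<i>)^(n-k)" by (simp add: power_add[symmetric])
  then show ?thesis by (simp add: mult.assoc[symmetric] i_mi del: power_minus)
qed

lemma split_high: "n \<le> k \<Longrightarrow> \<i>^k * (-\<i>)^n = \<i>^(k-n)"
proof -
  assume "n \<le> k"
  then have "\<i>^k = \<i>^(k-n) * \<i>^n" by (simp add: power_add[symmetric])
  then show ?thesis by (simp add: mult.assoc i_mi del: power_minus)
qed


lemma Re_sum_real: "Re (\<Sum>k\<in>S. complex_of_real (A k) * z k) = (\<Sum>k\<in>S. A k * Re (z k))"
  by (simp add: Re_sum)

lemma case1:
  fixes A :: "nat \<Rightarrow> real" and E :: real
  assumes sym: "\<And>k. k \<le> 2*n \<Longrightarrow> A k = A (2*n-k)"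
    and h: "(\<Sum>k<Suc (2*n). complex_of_real (A k) * \<i>^k) = (1+\<i>)^(2*n) * complex_of_real E"
  shows "E = (1/2^n) * (- A n + 2 * (\<Sum>i=0..n div 2. (-1)^i * A (n-2*i)))"
proof -
  define P where "P k = (k \<le> n \<and> even (n-k))" for k
  define t :: "nat \<Rightarrow> real" where "t k = 2*(if P k then (-1)^((n-k) div 2) else 0) - (if k = n then 1 else 0)" for k
  have sq: "(1+\<i>)^2 = 2*\<i>" by (simp add: power2_eq_square algebra_simps)
  have p: "(1+\<i>)^(2*n) = (2*\<i>)^n" by (simp only: power_mult sq)
  have "(\<Sum>k=0..2*n. complex_of_real (A k) * (\<i>^k * (-\<i>)^n)) = (\<Sum>k<Suc (2*n). complex_of_real (A k) * \<i>^k) * (-\<i>)^n"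
    by (simp add: sum_distrib_right atLeast0AtMost lessThan_Suc_atMost mult.assoc)
  also have "\<dots> = complex_of_real (2^n * E)"
    unfolding h p by (subst ac3) (simp only: pw2 of_real_mult of_real_power of_real_numeral)
  finally have "Re (\<Sum>k=0..2*n. complex_of_real (A k) * (\<i>^k * (-\<i>)^n)) = 2^n * E" by simp
  then have e1: "(\<Sum>k=0..2*n. A k * Re (\<i>^k * (-\<i>)^n)) = 2^n * E" by (simp only: Re_sum_real)
  define r :: "nat \<Rightarrow> real" where "r d = (if even d then (-1)^(d div 2) else 0)" for d
  have pw: "Re (\<i>^k * (-\<i>)^n) = (t k + t (2*n-k))/2" if "k \<le> 2*n" for k
  proof (cases "k \<le> n")
    case True
    have "Re (\<i>^k * (-\<i>)^n) = Re ((-\<i>)^(n-k))" by (simp only: split_low[OF True])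
    also have "\<dots> = Re (cnj (\<i>^(n-k)))" by (simp only: mi_pow)
    also have "\<dots> = r (n-k)" unfolding cnj.sel(1) re_i_pow r_def ..
    finally have a: "Re (\<i>^k * (-\<i>)^n) = r (n-k)" .
    have b: "t k = 2 * r (n-k) - (if k = n then 1 else 0)" using True by (simp add: t_def r_def P_def)
    have c: "t (2*n-k) = (if k = n then 1 else 0)"
    proof (cases "k = n")
      case True
      then show ?thesis by (simp add: t_def P_def)
    next
      case False
      then have "n < 2*n-k" "2*n-k \<noteq> n" using True by auto
      then show ?thesis using False by (simp add: t_def P_def)
    qed
    show ?thesis unfolding a b c by (cases "k = n") (simp_all add: r_def)
  next
    case False
    have nk: "n \<le> k" using False by simp
    have "Re (\<i>^k * (-\<i>)^n) = Re (\<i>^(k-n))" by (simp only: split_high[OF nk])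
    also have "\<dots> = r (k-n)" unfolding re_i_pow r_def ..
    finally have "Re (\<i>^k * (-\<i>)^n) = r (k-n)" .
    moreover have "t k = 0" using False by (simp add: t_def P_def)
    moreover have "t (2*n-k) = 2 * r (k-n)"
    proof -
      have f: "2*n-k \<le> n" "2*n-k \<noteq> n" "n-(2*n-k) = k-n" using False that by auto
      show ?thesis unfolding t_def r_def P_def using f by simp
    qed
    ultimately show ?thesis by simp
  qed
  have "(\<Sum>k=0..2*n. A k * Re (\<i>^k * (-\<i>)^n)) = (\<Sum>k=0..2*n. A k * ((t k + t (2*n-k))/2))"
  proof (intro sum.cong refl)
    fix k assume "k \<in> {0..2*n}"
    then have "k \<le> 2*n" by simp
    then show "A k * Re (\<i>^k * (-\<i>)^n) = A k * ((t k + t (2*n-k))/2)" by (simp only: pw)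
  qed
  also have "\<dots> = (\<Sum>k=0..2*n. A k * t k)" by (rule sym_avg[of "2*n" A t, OF sym, symmetric])
  also have "\<dots> = (\<Sum>k=0..2*n. 2 * (if P k then (-1)^((n-k) div 2) * A k else 0) - (if k = n then A k else 0))"
    by (intro sum.cong refl) (simp add: t_def algebra_simps)
  also have "\<dots> = 2 * (\<Sum>k=0..2*n. if P k then (-1)^((n-k) div 2) * A k else 0) - (\<Sum>k=0..2*n. if k = n then A k else 0)"
    by (simp only: sum_subtractf sum_distrib_left)
  also have "(\<Sum>k=0..2*n. if k = n then A k else 0) = A n" by (simp add: sum.delta)
  also have "(\<Sum>k=0..2*n. if P k then (-1)^((n-k) div 2) * A k else 0)
      = (\<Sum>k\<in>{k\<in>{0..2*n}. k \<le> n \<and> even (n-k)}. (-1)^((n-k) div 2) * A k)"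
    unfolding P_def by (simp only: sum.inter_filter[symmetric] finite_atLeastAtMost)
  also have "\<dots> = (\<Sum>i=0..n div 2. (-1)^i * A (n-2*i))"
    by (rule sum.reindex_bij_witness[where i="\<lambda>j. n-2*j" and j="\<lambda>k. (n-k) div 2"]) auto
  finally show ?thesis using e1 by (simp add: field_simps)
qed


definition cc :: "nat \<Rightarrow> real" where
  "cc d = 2 * (\<Sum>i=0..d div 2. (-1)^(d-i)) - (-1)^d"

lemma cc_step: "cc (Suc (Suc d)) = - cc d"
proof -
  have "(\<Sum>i=0..Suc (Suc d) div 2. (-1::real)^(Suc (Suc d)-i)) = (\<Sum>i=0..Suc (d div 2). (-1)^(Suc (Suc d)-i))"
    by simp
  also have "\<dots> = (-1)^(Suc (Suc d)) + (\<Sum>i=0..d div 2. (-1)^(Suc (Suc d) - Suc i))"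
    by (subst sum.atLeast0_atMost_Suc_shift) (simp add: comp_def)
  also have "(\<Sum>i=0..d div 2. (-1::real)^(Suc (Suc d) - Suc i)) = (\<Sum>i=0..d div 2. - ((-1)^(d-i)))"
  proof (intro sum.cong refl)
    fix i assume "i \<in> {0..d div 2}"
    then have "Suc (Suc d) - Suc i = Suc (d - i)" by auto
    then show "(-1::real)^(Suc (Suc d) - Suc i) = - ((-1)^(d-i))" by simp
  qed
  finally show ?thesis by (simp add: cc_def sum_negf)
qed

lemma re_cc: "Re (\<i>^d * (1+\<i>)) = cc d"
proof -
  have "Re (\<i>^d * (1+\<i>)) = cc d \<and> Re (\<i>^(Suc d) * (1+\<i>)) = cc (Suc d)"
  proof (induction d)
    case 0
    then show ?case by (simp add: cc_def)
  next
    case (Suc d)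
    have "\<i>^(Suc (Suc d)) * (1+\<i>) = - (\<i>^d * (1+\<i>))" by (simp add: algebra_simps)
    then show ?case using Suc cc_step[of d] by simp
  qed
  then show ?thesis by simp
qed

lemma ac4: "(a::complex)*b*(c*w) = (a*c)*(b*w)" by (simp add: ac_simps)

lemma re_half: "Re (X / 2) = Re X / 2" by simp

lemma case2:
  fixes A :: "nat \<Rightarrow> real" and E :: real
  assumes sym: "\<And>k. k \<le> 2*n+1 \<Longrightarrow> A k = A (2*n+1-k)"
    and h: "(\<Sum>k<Suc (2*n+1). complex_of_real (A k) * \<i>^k) = (1+\<i>)^(2*n+1) * complex_of_real E"
  shows "E = (1/2^n) * (- (\<Sum>j=0..n. (-1)^(n-j) * A j)
             + 2 * (\<Sum>(i,j) \<in> {(i,j). 2*i + j \<le> n}. (-1)^(n-i-j) * A j))"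
proof -
  define t :: "nat \<Rightarrow> real" where "t k = (if k \<le> n then cc (n-k) else 0)" for k
  define z where "z = (-\<i>)^n * ((1-\<i>) / 2)"
  have sq: "(1+\<i>)^2 = 2*\<i>" by (simp add: power2_eq_square algebra_simps)
  have p: "(1+\<i>)^(2*n+1) = (2*\<i>)^n * (1+\<i>)" by (simp only: power_add power_mult sq power_one_right)
  have pz: "(1+\<i>)^(2*n+1) * z = 2^n"
  proof -
    have "(1+\<i>)^(2*n+1) * z = ((2*\<i>)^n * (-\<i>)^n) * ((1+\<i>) * (1-\<i>) / 2)"
      unfolding p z_def using ac4[of "(2*\<i>)^n" "1+\<i>" "(-\<i>)^n" "(1-\<i>)/2"] by simp
    also have "(2*\<i>)^n * (-\<i>)^n = (2::complex)^n" by (rule pw2)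
    also have "(1+\<i>) * (1-\<i>) / 2 = 1" by (simp add: algebra_simps)
    finally show ?thesis by simp
  qed
  have "(\<Sum>k=0..2*n+1. complex_of_real (A k) * (\<i>^k * z)) = (\<Sum>k<Suc (2*n+1). complex_of_real (A k) * \<i>^k) * z"
    by (simp only: atLeast0AtMost lessThan_Suc_atMost sum_distrib_right mult.assoc)
  also have "\<dots> = complex_of_real E * ((1+\<i>)^(2*n+1) * z)"
    unfolding h by (simp only: mult_ac)
  also have "\<dots> = complex_of_real (2^n * E)" unfolding pz by simp
  finally have "Re (\<Sum>k=0..2*n+1. complex_of_real (A k) * (\<i>^k * z)) = 2^n * E" by simp
  then have e1: "(\<Sum>k=0..2*n+1. A k * Re (\<i>^k * z)) = 2^n * E" by (simp only: Re_sum_real)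
  have pw: "Re (\<i>^k * z) = (t k + t (2*n+1-k))/2" if "k \<le> 2*n+1" for k
  proof -
    have z2: "\<i>^k * z = (\<i>^k * (-\<i>)^n * (1-\<i>)) / 2" by (simp add: z_def mult.assoc)
    show ?thesis
    proof (cases "k \<le> n")
      case True
      have "\<i>^k * (-\<i>)^n * (1-\<i>) = cnj (\<i>^(n-k) * (1+\<i>))"
        using split_low[OF True] by (simp del: power_minus)
      then have X: "Re (\<i>^k * (-\<i>)^n * (1-\<i>)) = cc (n-k)" by (simp only: cnj.sel(1) re_cc)
      have "t k = cc (n-k)" "t (2*n+1-k) = 0" using True by (auto simp: t_def)
      then show ?thesis unfolding z2 re_half X by simp
    next
      case False
      then obtain e where e: "k = Suc n + e" by (metis le_iff_add not_less_eq_eq)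
      have "\<i>^k * (-\<i>)^n * (1-\<i>) = \<i>^(Suc e) * (1-\<i>)"
        using split_high[of n k] e by (simp del: power_minus)
      also have "\<dots> = \<i>^e * (1+\<i>)" by (simp add: algebra_simps)
      finally have X: "Re (\<i>^k * (-\<i>)^n * (1-\<i>)) = cc e" by (simp only: re_cc)
      have "2*n+1-k = n - e" "n - e \<le> n" "n - (n-e) = e" using e that by auto
      then have "t k = 0" "t (2*n+1-k) = cc e" using False by (auto simp: t_def)
      then show ?thesis unfolding z2 re_half X by simp
    qed
  qed
  have "(\<Sum>k=0..2*n+1. A k * Re (\<i>^k * z)) = (\<Sum>k=0..2*n+1. A k * ((t k + t (2*n+1-k))/2))"
  proof (intro sum.cong refl)
    fix k assume "k \<in> {0..2*n+1}"
    then have "k \<le> 2*n+1" by simp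
    then show "A k * Re (\<i>^k * z) = A k * ((t k + t (2*n+1-k))/2)" by (simp only: pw)
  qed
  also have "\<dots> = (\<Sum>k=0..2*n+1. A k * t k)" by (rule sym_avg[of "2*n+1" A t, OF sym, symmetric])
  also have "\<dots> = (\<Sum>k=0..2*n+1. if k \<le> n then A k * cc (n-k) else 0)"
    by (intro sum.cong refl) (simp add: t_def)
  also have "\<dots> = (\<Sum>k\<in>{k\<in>{0..2*n+1}. k \<le> n}. A k * cc (n-k))"
    by (simp only: sum.inter_filter[symmetric] finite_atLeastAtMost)
  also have "{k\<in>{0..2*n+1}. k \<le> n} = {0..n}" by auto
  finally have e2: "(\<Sum>j=0..n. A j * cc (n-j)) = 2^n * E" using e1 by simp
  have "(\<Sum>(i,j) \<in> {(i,j). 2*i + j \<le> n}. (-1)^(n-i-j) * A j)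
      = (\<Sum>(j,i) \<in> (SIGMA j:{0..n}. {0..(n-j) div 2}). (-1::real)^(n-i-j) * A j)"
    by (rule sum.reindex_bij_witness[where i="\<lambda>(j,i). (i,j)" and j="\<lambda>(i,j). (j,i)"]) auto
  also have "\<dots> = (\<Sum>j=0..n. \<Sum>i=0..(n-j) div 2. (-1)^(n-i-j) * A j)"
    by (rule sum.Sigma[symmetric]) auto
  also have "\<dots> = (\<Sum>j=0..n. A j * (\<Sum>i=0..(n-j) div 2. (-1)^(n-j-i)))"
    by (simp only: sum_distrib_left diff_diff_left add.commute mult.commute)
  finally have e3: "(\<Sum>(i,j) \<in> {(i,j). 2*i + j \<le> n}. (-1)^(n-i-j) * A j) = (\<Sum>j=0..n. A j * (\<Sum>i=0..(n-j) div 2. (-1)^(n-j-i)))" .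
  have "(\<Sum>j=0..n. A j * cc (n-j)) = 2 * (\<Sum>j=0..n. A j * (\<Sum>i=0..(n-j) div 2. (-1)^(n-j-i))) - (\<Sum>j=0..n. (-1)^(n-j) * A j)"
    by (simp only: cc_def right_diff_distrib sum_subtractf sum_distrib_left mult_ac)
  then show ?thesis using e2 e3 by (simp add: field_simps)
qed




definition cmp :: "nat \<Rightarrow> nat list \<Rightarrow> nat list" where "cmp N p = map (\<lambda>x. Suc N - x) p"

lemma cmp_in: assumes "p \<in> perms N" shows "cmp N p \<in> perms N"
proof -
  have s: "set p = {1..N}" "distinct p" using assms by (auto dest: permutations_of_setD)
  have "(\<lambda>x. Suc N - x) ` {1..N} = {1..N}"
  proof
    show "(\<lambda>x. Suc N - x) ` {1..N} \<subseteq> {1..N}" by auto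
    show "{1..N} \<subseteq> (\<lambda>x. Suc N - x) ` {1..N}"
    proof
      fix x assume "x \<in> {1..N}"
      then have "x = Suc N - (Suc N - x)" "Suc N - x \<in> {1..N}" by auto
      then show "x \<in> (\<lambda>x. Suc N - x) ` {1..N}" by blast
    qed
  qed
  moreover have "inj_on (\<lambda>x. Suc N - x) {1..N}" by (auto simp: inj_on_def)
  ultimately show ?thesis using s by (auto simp: cmp_def permutations_of_set_def distinct_map)
qed

lemma cmp_cmp: assumes "p \<in> perms N" shows "cmp N (cmp N p) = p"
proof -
  have s: "set p = {1..N}" using assms by (auto dest: permutations_of_setD)
  show ?thesis unfolding cmp_def using s by (auto intro!: map_idI)
qed

lemma des_cmp: assumes "p \<in> perms N" shows "descents (cmp N p) = {1..<N} - descents p"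
proof -
  have s: "set p = {1..N}" "distinct p" "length p = N" using assms perms_length by (auto dest: permutations_of_setD)
  have "i \<in> descents (cmp N p) \<longleftrightarrow> i \<in> {1..<N} - descents p" for i
  proof (cases "1 \<le> i \<and> i < N")
    case True
    have a: "p ! (i-1) \<in> {1..N}" "p ! i \<in> {1..N}" using True s by (metis nth_mem less_imp_diff_less)+
    have ne: "p ! (i-1) \<noteq> p ! i"
    proof
      assume "p ! (i-1) = p ! i"
      then have "i - 1 = i" using nth_eq_iff_index_eq[OF s(2), of "i-1" i] True s(3) by linarith
      then show False using True by linarith
    qed
    show ?thesis using True a ne s by (auto simp: descents_def cmp_def)
  next
    case False
    then show ?thesis using s by (auto simp: descents_def cmp_def)
  qed
  then show ?thesis by blast
qed

lemma card_des_cmp: assumes "p \<in> perms N" shows "card (descents (cmp N p)) = (N - 1) - card (descents p)"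
proof -
  have "descents p \<subseteq> {1..<N}" using descents_sub[of p] perms_length[OF assms] by simp
  then show ?thesis unfolding des_cmp[OF assms] by (simp add: card_Diff_subset)
qed

lemma card_des_le: assumes "p \<in> perms N" shows "card (descents p) \<le> N - 1"
proof -
  have "descents p \<subseteq> {1..<N}" using descents_sub[of p] perms_length[OF assms] by simp
  then show ?thesis using card_mono[of "{1..<N}" "descents p"] by simp
qed

lemma eulerian_sym: assumes "k \<le> N - 1" shows "eulerian N k = eulerian N (N - 1 - k)"
  unfolding eulerian_def
proof (rule bij_betw_same_card[of "cmp N"], rule bij_betw_byWitness[where f'="cmp N"])
  show "\<forall>a\<in>{p \<in> perms N. card (descents p) = k}. cmp N (cmp N a) = a" by (auto simp: cmp_cmp)
  show "\<forall>a'\<in>{p \<in> perms N. card (descents p) = N - 1 - k}. cmp N (cmp N a') = a'" by (auto simp: cmp_cmp)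
  show "cmp N ` {p \<in> perms N. card (descents p) = k} \<subseteq> {p \<in> perms N. card (descents p) = N - 1 - k}"
  proof (rule image_subsetI)
    fix p assume "p \<in> {p \<in> perms N. card (descents p) = k}"
    then have p: "p \<in> perms N" "card (descents p) = k" by blast+
    show "cmp N p \<in> {p \<in> perms N. card (descents p) = N - 1 - k}"
      using cmp_in[OF p(1)] card_des_cmp[OF p(1)] p(2) by blast
  qed
  show "cmp N ` {p \<in> perms N. card (descents p) = N - 1 - k} \<subseteq> {p \<in> perms N. card (descents p) = k}"
  proof (rule image_subsetI)
    fix p assume "p \<in> {p \<in> perms N. card (descents p) = N - 1 - k}"
    then have p: "p \<in> perms N" "card (descents p) = N - 1 - k" by blast+
    have "card (descents (cmp N p)) = k" using card_des_cmp[OF p(1)] p(2) assms by simp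
    then show "cmp N p \<in> {p \<in> perms N. card (descents p) = k}"
      using cmp_in[OF p(1)] by blast
  qed
qed

lemma cardT: assumes "N = 2*n+1 \<or> N = 2*n+2" shows "card (T True N) = n"
proof -
  have "T True N = (\<lambda>j. 2*j) ` {1..n}"
  proof
    show "T True N \<subseteq> (\<lambda>j. 2*j) ` {1..n}"
    proof
      fix x assume "x \<in> T True N"
      then have x: "1 \<le> x" "x < N" "even x" by (auto simp: T_def)
      then obtain j where "x = 2*j" by blast
      then show "x \<in> (\<lambda>j. 2*j) ` {1..n}" using x assms by auto
    qed
    show "(\<lambda>j. 2*j) ` {1..n} \<subseteq> T True N" using assms by (auto simp: T_def)
  qed
  then show ?thesis by (simp add: card_image inj_on_def)
qed

lemma a_num_T: assumes "N = 2*n+1 \<or> N = 2*n+2"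
  shows "a_num N n = card {p \<in> perms N. descents p = T True N}"
proof -
  have "(card {i \<in> descents p. even i} = n \<and> (\<forall>i \<in> descents p. even i)) \<longleftrightarrow> descents p = T True N"
    if p: "p \<in> perms N" for p
  proof
    assume h: "card {i \<in> descents p. even i} = n \<and> (\<forall>i \<in> descents p. even i)"
    then have e: "{i \<in> descents p. even i} = descents p" by auto
    have sub: "descents p \<subseteq> T True N" using h descents_sub[of p] perms_length[OF p] by (auto simp: T_def)
    have "finite (T True N)" by (simp add: T_def)
    then show "descents p = T True N" using card_subset_eq[OF _ sub] h e cardT[OF assms] by auto
  next
    assume "descents p = T True N"
    then show "card {i \<in> descents p. even i} = n \<and> (\<forall>i \<in> descents p. even i)"
      using cardT[OF assms] by (auto simp: T_def)
  qed
  then show ?thesis unfolding a_num_def by (metis (no_types, lifting) Collect_cong)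
qed

lemma euler_T: "euler_num N = card {p \<in> perms N. descents p = T False N}"
  unfolding euler_num_def using T_euler by (metis (no_types, lifting) Collect_cong)

lemma euler_eq_a: assumes "N = 2*n+1 \<or> N = 2*n+2" shows "euler_num N = a_num N n"
proof -
  obtain m where m: "N = Suc m" using assms by auto
  have "(of_nat (card {p \<in> perms N. descents p = T True N}) :: complex) = of_nat (card {p \<in> perms N. descents p = T False N})"
    using sumC[of m] sumC_card[of N] m by simp
  then show ?thesis by (simp add: a_num_T[OF assms] euler_T)
qed


theorem corollary3p3:
  fixes n :: nat
  shows "euler_num (2*n+1) = a_num (2*n+1) n
       \<and> real (a_num (2*n+1) n) =
           (1 / 2^n) * (- real (eulerian (2*n+1) n)
             + 2 * (\<Sum>i=0..n div 2. (-1)^i * real (eulerian (2*n+1) (n - 2*i))))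
       \<and> euler_num (2*n+2) = a_num (2*n+2) n
       \<and> real (a_num (2*n+2) n) =
           (1 / 2^n) * (- (\<Sum>j=0..n. (-1)^(n-j) * real (eulerian (2*n+2) j))
             + 2 * (\<Sum>(i,j) \<in> {(i,j). 2*i + j \<le> n}.
                      (-1)^(n-i-j) * real (eulerian (2*n+2) j)))"
proof (intro conjI)
  show e1: "euler_num (2*n+1) = a_num (2*n+1) n" by (rule euler_eq_a) simp
  show e2: "euler_num (2*n+2) = a_num (2*n+2) n" by (rule euler_eq_a) simp
  have h1: "(\<Sum>k<Suc (2*n). complex_of_real (real (eulerian (2*n+1) k)) * \<i>^k)
      = (1+\<i>)^(2*n) * complex_of_real (real (euler_num (2*n+1)))"
    using core[of "2*n"] by simp
  have s1: "real (eulerian (2*n+1) k) = real (eulerian (2*n+1) (2*n-k))" if "k \<le> 2*n" for k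
    using eulerian_sym[of k "2*n+1"] that by simp
  show "real (a_num (2*n+1) n) =
           (1 / 2^n) * (- real (eulerian (2*n+1) n)
             + 2 * (\<Sum>i=0..n div 2. (-1)^i * real (eulerian (2*n+1) (n - 2*i))))"
    unfolding e1[symmetric] by (rule case1[OF s1 h1])
  have h2: "(\<Sum>k<Suc (2*n+1). complex_of_real (real (eulerian (2*n+2) k)) * \<i>^k)
      = (1+\<i>)^(2*n+1) * complex_of_real (real (euler_num (2*n+2)))"
    using core[of "2*n+1"] by simp
  have s2: "real (eulerian (2*n+2) k) = real (eulerian (2*n+2) (2*n+1-k))" if "k \<le> 2*n+1" for k
    using eulerian_sym[of k "2*n+2"] that by simp
  show "real (a_num (2*n+2) n) =
           (1 / 2^n) * (- (\<Sum>j=0..n. (-1)^(n-j) * real (eulerian (2*n+2) j))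
             + 2 * (\<Sum>(i,j) \<in> {(i,j). 2*i + j \<le> n}.
                      (-1)^(n-i-j) * real (eulerian (2*n+2) j)))"
    unfolding e2[symmetric] by (rule case2[OF s2 h2])
qed


end
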